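(* Let $N\ge3$ be odd. Define $v_0=1$, $v_1=1/2$ and, for $0<k<N-1$, $$v_{k+1}=\frac{\tfrac12(N^2-1)v_k+k(N^2-2k^2-3k-2)v_k-k(N^2-k^2)v_{k-1}}{(k+1)\big(N^2-(k+1)^2\big)}.$$ Then $\vec v=(v_0,\dots,v_{N-1})$ is an eigenvector, with rational entries, of the $N\times N$ matrix $J_N$ (symmetric tridiagonal with $(J_N)_{kk}=k(2k^2+3k+2-N^2)$, $(J_N)_{k,k+1}=(J_N)_{k+1,k}=(k+1)(N^2-(k+1)^2)$) with eigenvalue $(N^2-1)/2$, and hence also an eigenvector of the Pascal matrix $(T_N)_{jk}=\binom{j+k}{j}$ with eigenvalue $1$; every eigenvector of $J_N$ with eigenvalue $(N^2-1)/2$ is a scalar multiple of $\vec v$.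
   Context: Matrix indices start at $0$. *)

theory Defs
  imports Complex_Main "Jordan_Normal_Form.Char_Poly"
begin

fun vseq :: "nat \<Rightarrow> nat \<Rightarrow> real" where
  "vseq N 0 = 1"
| "vseq N (Suc 0) = 1/2"
| "vseq N (Suc (Suc k)) =
     (let n = real N; j = real (Suc k) in
      ((n^2 - 1)/2 * vseq N (Suc k) + j * (n^2 - 2*j^2 - 3*j - 2) * vseq N (Suc k)
        - j * (n^2 - j^2) * vseq N k) / ((j + 1) * (n^2 - (j + 1)^2)))"

definition vvec :: "nat \<Rightarrow> real vec" where
  "vvec N = vec N (vseq N)"

definition Jmat :: "nat \<Rightarrow> real mat" where
  "Jmat N = mat N N (\<lambda>(j, k).
     let n = real N in
     if j = k then real k * (2 * real k^2 + 3 * real k + 2 - n^2)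
     else if k = j + 1 then real k * (n^2 - real k^2)
     else if j = k + 1 then real j * (n^2 - real j^2)
     else 0)"

definition Pascal :: "nat \<Rightarrow> real mat" where
  "Pascal N = mat N N (\<lambda>(j, k). real ((j + k) choose j))"

end

theory Submission
  imports Defs
begin

definition jo :: "nat \<Rightarrow> nat \<Rightarrow> real" where
  "jo N k = real k * (real N^2 - real k^2)"
definition jd :: "nat \<Rightarrow> nat \<Rightarrow> real" where
  "jd N k = real k * (2 * real k^2 + 3 * real k + 2 - real N^2)"

lemma jo0[simp]: "jo N 0 = 0" and joN[simp]: "jo N N = 0" by (simp_all add: jo_def)

lemma P1:
  "jo N a * real (a - 1 + b choose (a - 1)) + jd N a * real (a + b choose a) + jo N (a+1) * real (a + 1 + b choose (a+1))
   = real (a + (b - 1) choose a) * jo N b + real (a + b choose a) * jd N b + real (a + (b+1) choose a) * jo N (b+1)"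
proof (cases "a + b = 0")
  case True then show ?thesis by simp
next
  case False
  define s where "s = a + b"
  define c where "c = real (a + b choose a)"
  have G1: "jo N b * (real s * real (a + (b - 1) choose a)) = jo N b * (real b * c)"
  proof (cases "b = 0")
    case True then show ?thesis by simp
  next
    case F: False
    have "(s - a) * (s choose a) = s * ((s - 1) choose a)" by (rule binomial_absorb_comp)
    moreover have "a + (b - 1) = s - 1" using F s_def by auto
    moreover have "s - a = b" using s_def by simp
    ultimately show ?thesis unfolding c_def s_def by (metis of_nat_mult)
  qed
  have G2: "real (b+1) * real (a + (b+1) choose a) = real (s+1) * c"
  proof -
    have "(s + 1 - a) * ((s+1) choose a) = (s+1) * ((s + 1 - 1) choose a)" by (rule binomial_absorb_comp)
    then show ?thesis unfolding c_def s_def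
      by (metis add.commute add.left_commute add_diff_cancel_left' diff_add_inverse2 of_nat_mult)
  qed
  have G3: "jo N a * (real s * real (a - 1 + b choose (a - 1))) = jo N a * (real a * c)"
  proof (cases "a = 0")
    case True then show ?thesis by simp
  next
    case F: False
    have "a * (s choose a) = s * ((s - 1) choose (a - 1))" using F by (simp add: times_binomial_minus1_eq)
    moreover have "a - 1 + b = s - 1" using F s_def by auto
    ultimately show ?thesis unfolding c_def s_def
      by (metis of_nat_mult)
  qed
  have G4: "real (a+1) * real (a + 1 + b choose (a+1)) = real (s+1) * c"
  proof -
    have "Suc a * (Suc s choose Suc a) = Suc s * (s choose a)" by (rule Suc_times_binomial)
    then show ?thesis unfolding c_def s_def
      by (metis Suc_eq_plus1 add.commute add.left_commute of_nat_mult)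
  qed
  have "s > 0" using False s_def by simp
  then have sp: "real s > 0" by simp
  let ?X1 = "real (a - 1 + b choose (a - 1))" and ?X2 = "real (a + 1 + b choose (a+1))"
    and ?X3 = "real (a + (b - 1) choose a)" and ?X4 = "real (a + (b+1) choose a)"
  have "real s * real (a+1) * real (b+1) * (jo N a * ?X1 + jd N a * c + jo N (a+1) * ?X2)
     = real s * real (a+1) * real (b+1) * (?X3 * jo N b + c * jd N b + ?X4 * jo N (b+1))"
  proof -
    have L: "real s * real (a+1) * real (b+1) * (jo N a * ?X1 + jd N a * c + jo N (a+1) * ?X2)
      = real (a+1) * real (b+1) * (jo N a * (real s * ?X1)) + real s * real (a+1) * real (b+1) * jd N a * c
        + real s * real (b+1) * jo N (a+1) * (real (a+1) * ?X2)" by (simp add: algebra_simps)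
    have R: "real s * real (a+1) * real (b+1) * (?X3 * jo N b + c * jd N b + ?X4 * jo N (b+1))
      = real (a+1) * real (b+1) * (jo N b * (real s * ?X3)) + real s * real (a+1) * real (b+1) * jd N b * c
        + real s * real (a+1) * jo N (b+1) * (real (b+1) * ?X4)" by (simp add: algebra_simps)
    show ?thesis unfolding L R G1 G2 G3 G4 unfolding s_def jo_def jd_def of_nat_add of_nat_1 by (simp add: power2_eq_square algebra_simps)
  qed
  then show ?thesis using sp unfolding c_def by simp
qed

definition kf :: "nat \<Rightarrow> nat \<Rightarrow> real" where
  "kf i j = (-1)^j * real (i choose j)"

lemma P2core:
  fixes b m :: nat
  defines "a \<equiv> b + m"
  shows "- real (a choose (b - 1)) * jo N b + real (a choose b) * jd N b - real (a choose (b+1)) * jo N (b+1)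
    + jo N a * real ((a - 1) choose b) + jd N a * real (a choose b) + jo N (a+1) * real ((a+1) choose b)
    = (real N^2 - 1) * real (a choose b)"
proof -
  define c where "c = real (a choose b)"
  have H1: "jo N b * (real (m+1) * real (a choose (b - 1))) = jo N b * (real b * c)"
  proof (cases "b = 0")
    case True then show ?thesis by simp
  next
    case F: False
    then obtain k where k: "b = Suc k" by (cases b) auto
    have e1: "Suc k * (a choose Suc k) = a * ((a - 1) choose k)" by (rule binomial_absorption)
    have e2: "(a - k) * (a choose k) = a * ((a - 1) choose k)" by (rule binomial_absorb_comp)
    have "a - k = m + 1" using k a_def by simp
    then have "real (m+1) * real (a choose k) = real b * c" using e1 e2 k unfolding c_def
      by (metis of_nat_mult)
    then show ?thesis using k by simp
  qed
  have H2: "real (b+1) * real (a choose (b+1)) = real m * c"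
  proof -
    have e1: "Suc b * (a choose Suc b) = a * ((a - 1) choose b)" by (rule binomial_absorption)
    have e2: "(a - b) * (a choose b) = a * ((a - 1) choose b)" by (rule binomial_absorb_comp)
    have "a - b = m" using a_def by simp
    then show ?thesis using e1 e2 unfolding c_def by (metis Suc_eq_plus1 of_nat_mult)
  qed
  have H3: "real a * real ((a - 1) choose b) = real m * c"
  proof -
    have e2: "(a - b) * (a choose b) = a * ((a - 1) choose b)" by (rule binomial_absorb_comp)
    have "a - b = m" using a_def by simp
    then show ?thesis using e2 unfolding c_def by (metis of_nat_mult)
  qed
  have H4: "real (m+1) * real ((a+1) choose b) = real (a+1) * c"
  proof -
    have e2: "(a + 1 - b) * ((a+1) choose b) = (a+1) * ((a + 1 - 1) choose b)" by (rule binomial_absorb_comp)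
    have "a + 1 - b = m + 1" using a_def by simp
    then show ?thesis using e2 unfolding c_def by (metis add_diff_cancel_right' of_nat_mult)
  qed
  let ?X1 = "real (a choose (b - 1))" and ?X2 = "real (a choose (b+1))"
    and ?X3 = "real ((a - 1) choose b)" and ?X4 = "real ((a+1) choose b)"
  have joa: "jo N a * ?X3 = (real N^2 - real a^2) * (real a * ?X3)" by (simp add: jo_def)
  have "real (m+1) * real (b+1) * (- ?X1 * jo N b + c * jd N b - ?X2 * jo N (b+1)
    + jo N a * ?X3 + jd N a * c + jo N (a+1) * ?X4)
    = real (m+1) * real (b+1) * ((real N^2 - 1) * c)"
  proof -
    have L: "real (m+1) * real (b+1) * (- ?X1 * jo N b + c * jd N b - ?X2 * jo N (b+1)
    + jo N a * ?X3 + jd N a * c + jo N (a+1) * ?X4)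
      = - real (b+1) * (jo N b * (real (m+1) * ?X1)) + real (m+1) * real (b+1) * c * jd N b
        - real (m+1) * jo N (b+1) * (real (b+1) * ?X2)
        + real (m+1) * real (b+1) * (real N^2 - real a^2) * (real a * ?X3)
        + real (m+1) * real (b+1) * jd N a * c + real (b+1) * jo N (a+1) * (real (m+1) * ?X4)"
      unfolding joa by (simp add: algebra_simps)
    show ?thesis unfolding L H1 H2 H3 H4 unfolding a_def jo_def jd_def of_nat_add of_nat_1
      by (simp add: power2_eq_square algebra_simps)
  qed
  moreover have nz: "real (m+1) * real (b+1) \<noteq> 0" by simp
  ultimately show ?thesis unfolding c_def by (metis mult_left_cancel)
qed

lemma P2:
  "kf a (b - 1) * jo N b + kf a b * jd N b + kf a (b+1) * jo N (b+1)
   + jo N a * kf (a - 1) b + jd N a * kf a b + jo N (a+1) * kf (a+1) b = (real N^2 - 1) * kf a b"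
proof -
  consider "b \<le> a" | "b = a + 1" | "b > a + 1" by linarith
  then show ?thesis
  proof cases
    case 1
    then obtain m where a: "a = b + m" by (metis le_add_diff_inverse)
    have s1: "kf a (b - 1) * jo N b = (-1)^b * (- real (a choose (b - 1)) * jo N b)"
      by (cases b) (auto simp: kf_def)
    have "(-1)^b * ((- real (a choose (b - 1)) * jo N b + real (a choose b) * jd N b - real (a choose (b+1)) * jo N (b+1)
    + jo N a * real ((a - 1) choose b) + jd N a * real (a choose b) + jo N (a+1) * real ((a+1) choose b)))
      = (-1)^b * ((real N^2 - 1) * real (a choose b))"
      using P2core[of b m N] a by simp
    then show ?thesis unfolding s1 by (simp add: kf_def algebra_simps)
  next
    case 2
    then show ?thesis by (simp add: kf_def algebra_simps binomial_eq_0)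
  next
    case 3
    then show ?thesis by (simp add: kf_def binomial_eq_0)
  qed
qed

lemma P3:
  assumes "i < N"
  shows "(\<Sum>l = 0..<N. kf i l * real (l choose j)) = (if i = j then (-1)^i else 0)"
proof -
  let ?f = "\<lambda>l. kf i l * real (l choose j)"
  have 1: "(\<Sum>l = 0..<N. ?f l) = (\<Sum>l \<in> {j..i}. ?f l)"
    by (rule sum.mono_neutral_right) (use assms in \<open>auto simp: kf_def binomial_eq_0\<close>)
  show ?thesis
  proof (cases "j \<le> i")
    case False then show ?thesis unfolding 1 by auto
  next
    case True
    have "(\<Sum>l \<in> {j..i}. ?f l) = (\<Sum>t \<in> {0..i-j}. ?f (t + j))"
      using sum.shift_bounds_cl_nat_ivl[of ?f 0 j "i - j"] True by simp
    also have "\<dots> = (\<Sum>t \<in> {0..i-j}. (-1)^j * real (i choose j) * ((-1)^t * real ((i - j) choose t)))"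
    proof (rule sum.cong[OF refl])
      fix t assume t: "t \<in> {0..i-j}"
      have "(i choose (t + j)) * ((t + j) choose j) = (i choose j) * ((i - j) choose (t + j - j))"
        by (rule choose_mult) (use t True in auto)
      then have "real (i choose (t + j)) * real ((t + j) choose j) = real (i choose j) * real ((i - j) choose t)"
        by (metis add_diff_cancel_right' of_nat_mult)
      then show "?f (t + j) = (-1)^j * real (i choose j) * ((-1)^t * real ((i - j) choose t))"
        unfolding kf_def by (simp add: power_add algebra_simps)
    qed
    also have "\<dots> = (-1)^j * real (i choose j) * (\<Sum>t \<le> i-j. (-1)^t * real ((i - j) choose t))"
      by (simp add: sum_distrib_left atLeast0AtMost)
    also have "\<dots> = (if i = j then (-1)^i else 0)"
    proof (cases "i = j")
      case True then show ?thesis by simp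
    next
      case False
      then have "i - j > 0" using \<open>j \<le> i\<close> by simp
      from choose_alternating_sum[OF this, where 'a=real] False show ?thesis by simp
    qed
    finally show ?thesis unfolding 1 .
  qed
qed

lemma P4:
  assumes "i < N" "j < N"
  shows "(\<Sum>l = 0..<N. real (i choose l) * real (j choose l)) = real ((i + j) choose i)"
proof -
  have "(\<Sum>l = 0..<N. real (i choose l) * real (j choose l)) = (\<Sum>l \<le> j. real (i choose l) * real (j choose l))"
    by (rule sum.mono_neutral_right) (use assms in \<open>auto simp: binomial_eq_0\<close>)
  also have "\<dots> = (\<Sum>l \<le> j. real ((i choose l) * (j choose (j - l))))"
    by (rule sum.cong[OF refl]) (simp flip: binomial_symmetric)
  also have "\<dots> = real (\<Sum>l \<le> j. (i choose l) * (j choose (j - l)))"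
    by (simp only: of_nat_sum)
  also have "\<dots> = real ((i + j) choose j)"
    by (simp only: vandermonde)
  also have "\<dots> = real ((i + j) choose i)"
    by (metis binomial_symmetric add_diff_cancel_right' le_add2)
  finally show ?thesis .
qed

definition lam :: "nat \<Rightarrow> real" where "lam N = (real N^2 - 1) / 2"

definition Jent :: "nat \<Rightarrow> nat \<Rightarrow> nat \<Rightarrow> real" where
  "Jent N j k = (if j = k then jd N k else if k = j + 1 then jo N k else if j = k + 1 then jo N j else 0)"

definition Aent :: "nat \<Rightarrow> nat \<Rightarrow> nat \<Rightarrow> real" where
  "Aent N j k = Jent N j k - (if j = k then lam N else 0)"

lemma Jmat_carrier[simp]: "Jmat N \<in> carrier_mat N N" by (simp add: Jmat_def)
lemma Jmat_idx[simp]: "j < N \<Longrightarrow> k < N \<Longrightarrow> Jmat N $$ (j,k) = Jent N j k"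
  by (simp add: Jmat_def Jent_def jd_def jo_def Let_def)

lemma Jent_sym: "Jent N j k = Jent N k j" by (auto simp: Jent_def)

lemma SJ1: assumes "a < N"
  shows "(\<Sum>l = 0..<N. Jent N a l * f l) = jo N a * f (a - 1) + jd N a * f a + jo N (a+1) * f (a+1)"
proof -
  have "\<And>l. Jent N a l * f l = (if l = a then jd N a * f a else 0) + (if l = a + 1 then jo N (a+1) * f (a+1) else 0)
     + (if l = a - 1 then (if 0 < a then jo N a * f (a - 1) else 0) else 0)"
    by (auto simp: Jent_def)
  then have "(\<Sum>l = 0..<N. Jent N a l * f l) = (\<Sum>l = 0..<N. (if l = a then jd N a * f a else 0))
    + (\<Sum>l = 0..<N. (if l = a + 1 then jo N (a+1) * f (a+1) else 0))
    + (\<Sum>l = 0..<N. (if l = a - 1 then (if 0 < a then jo N a * f (a - 1) else 0) else 0))"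
    by (simp add: sum.distrib)
  also have "\<dots> = jo N a * f (a - 1) + jd N a * f a + jo N (a+1) * f (a+1)"
  proof (cases "a + 1 < N")
    case True then show ?thesis using assms by (auto simp: sum.delta)
  next
    case False then have "a + 1 = N" using assms by linarith
    then show ?thesis using assms by (auto simp: sum.delta)
  qed
  finally show ?thesis .
qed

lemma SJ2: assumes "b < N"
  shows "(\<Sum>l = 0..<N. f l * Jent N l b) = f (b - 1) * jo N b + f b * jd N b + f (b+1) * jo N (b+1)"
  using SJ1[OF assms, of f] by (simp add: Jent_sym[of N _ b] mult.commute)

lemma SA1: assumes "a < N"
  shows "(\<Sum>l = 0..<N. Aent N a l * f l) = jo N a * f (a - 1) + (jd N a - lam N) * f a + jo N (a+1) * f (a+1)"
proof -
  have "\<And>l. Aent N a l * f l = Jent N a l * f l - (if l = a then lam N * f a else 0)"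
    by (auto simp: Aent_def algebra_simps)
  then have "(\<Sum>l = 0..<N. Aent N a l * f l) = (\<Sum>l = 0..<N. Jent N a l * f l) - (\<Sum>l = 0..<N. if l = a then lam N * f a else 0)"
    by (simp add: sum_subtractf)
  then show ?thesis using assms SJ1[OF assms, of f] by (simp add: algebra_simps)
qed

lemma SA2: assumes "b < N"
  shows "(\<Sum>l = 0..<N. f l * Aent N l b) = f (b - 1) * jo N b + f b * (jd N b - lam N) + f (b+1) * jo N (b+1)"
proof -
  have "\<And>l. f l * Aent N l b = f l * Jent N l b - (if l = b then f b * lam N else 0)"
    by (auto simp: Aent_def algebra_simps)
  then have "(\<Sum>l = 0..<N. f l * Aent N l b) = (\<Sum>l = 0..<N. f l * Jent N l b) - (\<Sum>l = 0..<N. if l = b then f b * lam N else 0)"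
    by (simp add: sum_subtractf)
  then show ?thesis using assms SJ2[OF assms, of f] by (simp add: algebra_simps)
qed

definition Amat :: "nat \<Rightarrow> real mat" where "Amat N = mat N N (\<lambda>(j,k). Aent N j k)"
definition Kmat :: "nat \<Rightarrow> real mat" where "Kmat N = mat N N (\<lambda>(i,j). kf i j)"
definition Lmat :: "nat \<Rightarrow> real mat" where "Lmat N = mat N N (\<lambda>(i,j). real (i choose j))"
definition Dmat :: "nat \<Rightarrow> real mat" where "Dmat N = mat N N (\<lambda>(i,j). if i = j then (-1)^i else 0)"

lemma carriers[simp]: "Amat N \<in> carrier_mat N N" "Kmat N \<in> carrier_mat N N" "Lmat N \<in> carrier_mat N N"
  "Dmat N \<in> carrier_mat N N" "Pascal N \<in> carrier_mat N N"
  by (simp_all add: Amat_def Kmat_def Lmat_def Dmat_def Pascal_def)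

lemma idxs[simp]: "i < N \<Longrightarrow> j < N \<Longrightarrow> Amat N $$ (i,j) = Aent N i j"
  "i < N \<Longrightarrow> j < N \<Longrightarrow> Kmat N $$ (i,j) = kf i j"
  "i < N \<Longrightarrow> j < N \<Longrightarrow> Lmat N $$ (i,j) = real (i choose j)"
  "i < N \<Longrightarrow> j < N \<Longrightarrow> Dmat N $$ (i,j) = (if i = j then (-1)^i else 0)"
  "i < N \<Longrightarrow> j < N \<Longrightarrow> Pascal N $$ (i,j) = real ((i + j) choose i)"
  by (simp_all add: Amat_def Kmat_def Lmat_def Dmat_def Pascal_def)

lemma dims[simp]: "dim_row (Amat N) = N" "dim_col (Amat N) = N" "dim_row (Kmat N) = N" "dim_col (Kmat N) = N"
  "dim_row (Lmat N) = N" "dim_col (Lmat N) = N" "dim_row (Dmat N) = N" "dim_col (Dmat N) = N"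
  "dim_row (Pascal N) = N" "dim_col (Pascal N) = N"
  by (simp_all add: Amat_def Kmat_def Lmat_def Dmat_def Pascal_def)

lemma mult_idx:
  assumes "A \<in> carrier_mat N N" "B \<in> carrier_mat N N" "i < N" "j < N"
  shows "(A * B) $$ (i,j) = (\<Sum>l = 0..<N. A $$ (i,l) * B $$ (l,j))"
  using assms by (simp add: scalar_prod_def)

lemma mv_idx:
  assumes "A \<in> carrier_mat N N" "w \<in> carrier_vec N" "i < N"
  shows "(A *\<^sub>v w) $ i = (\<Sum>l = 0..<N. A $$ (i,l) * w $ l)"
  using assms by (simp add: scalar_prod_def)

lemma lam2: "2 * lam N = real N^2 - 1" by (simp add: lam_def)

lemma KA_AK_sum:
  assumes "i < N" "j < N"
  shows "(Kmat N * Amat N) $$ (i,j) + (Amat N * Kmat N) $$ (i,j) = 0"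
proof -
  have "(Kmat N * Amat N) $$ (i,j) = (\<Sum>l = 0..<N. kf i l * Aent N l j)"
    using assms by (subst mult_idx[of _ N]) (auto intro!: sum.cong)
  also have "\<dots> = kf i (j - 1) * jo N j + kf i j * (jd N j - lam N) + kf i (j+1) * jo N (j+1)"
    using SA2[OF assms(2), of "kf i"] .
  finally have 1: "(Kmat N * Amat N) $$ (i,j) = \<dots>" .
  have "(Amat N * Kmat N) $$ (i,j) = (\<Sum>l = 0..<N. Aent N i l * kf l j)"
    using assms by (subst mult_idx[of _ N]) (auto intro!: sum.cong)
  also have "\<dots> = jo N i * kf (i - 1) j + (jd N i - lam N) * kf i j + jo N (i+1) * kf (i+1) j"
    using SA1[OF assms(1), of "\<lambda>l. kf l j"] .
  finally have 2: "(Amat N * Kmat N) $$ (i,j) = \<dots>" .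
  have "kf i (j - 1) * jo N j + kf i j * (jd N j - lam N) + kf i (j+1) * jo N (j+1)
    + (jo N i * kf (i - 1) j + (jd N i - lam N) * kf i j + jo N (i+1) * kf (i+1) j)
    = (kf i (j - 1) * jo N j + kf i j * jd N j + kf i (j+1) * jo N (j+1)
   + jo N i * kf (i - 1) j + jd N i * kf i j + jo N (i+1) * kf (i+1) j) - 2 * lam N * kf i j"
    by (simp add: algebra_simps)
  also have "\<dots> = (real N^2 - 1) * kf i j - 2 * lam N * kf i j" using P2[of i j N] by simp
  also have "\<dots> = 0" by (simp add: lam2[symmetric])
  finally show ?thesis unfolding 1 2 .
qed

lemma KA: "Kmat N * Amat N = (-1) \<cdot>\<^sub>m (Amat N * Kmat N)"
  by (rule eq_matI) (use KA_AK_sum in \<open>auto simp: algebra_simps eq_neg_iff_add_eq_0\<close>)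

lemma AK: "Amat N * Kmat N = (-1) \<cdot>\<^sub>m (Kmat N * Amat N)"
  by (rule eq_matI) (use KA_AK_sum in \<open>auto simp: algebra_simps eq_neg_iff_add_eq_0\<close>)

lemma TA: "Pascal N * Amat N = Amat N * Pascal N"
proof (rule eq_matI)
  fix a b assume ab: "a < dim_row (Amat N * Pascal N)" "b < dim_col (Amat N * Pascal N)"
  then have a: "a < N" and b: "b < N" by auto
  have "(Pascal N * Amat N) $$ (a,b) = (\<Sum>l = 0..<N. real ((a + l) choose a) * Aent N l b)"
    using a b by (subst mult_idx[of _ N]) (auto intro!: sum.cong)
  also have "\<dots> = real ((a + (b - 1)) choose a) * jo N b + real ((a + b) choose a) * (jd N b - lam N)
     + real ((a + (b + 1)) choose a) * jo N (b+1)"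
    using SA2[OF b, of "\<lambda>l. real ((a + l) choose a)"] .
  finally have 1: "(Pascal N * Amat N) $$ (a,b) = \<dots>" .
  have "(Amat N * Pascal N) $$ (a,b) = (\<Sum>l = 0..<N. Aent N a l * real ((l + b) choose l))"
    using a b by (subst mult_idx[of _ N]) (auto intro!: sum.cong)
  also have "\<dots> = jo N a * real ((a - 1 + b) choose (a - 1)) + (jd N a - lam N) * real ((a + b) choose a)
     + jo N (a+1) * real ((a + 1 + b) choose (a + 1))"
    using SA1[OF a, of "\<lambda>l. real ((l + b) choose l)"] .
  finally have 2: "(Amat N * Pascal N) $$ (a,b) = \<dots>" .
  show "(Pascal N * Amat N) $$ (a,b) = (Amat N * Pascal N) $$ (a,b)"
    unfolding 1 2 using P1[of N a b] by (simp add: algebra_simps)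
qed simp_all

lemma KLD: "Kmat N = Lmat N * Dmat N"
proof (rule eq_matI)
  fix i j assume "i < dim_row (Lmat N * Dmat N)" "j < dim_col (Lmat N * Dmat N)"
  then have ij: "i < N" "j < N" by auto
  have "(Lmat N * Dmat N) $$ (i,j) = (\<Sum>l = 0..<N. real (i choose l) * (if l = j then (-1)^l else 0))"
    using ij by (subst mult_idx[of _ N]) (auto intro!: sum.cong)
  also have "\<dots> = (\<Sum>l = 0..<N. if l = j then real (i choose j) * (-1)^j else 0)"
    by (rule sum.cong) auto
  also have "\<dots> = kf i j" using ij by (simp add: kf_def)
  finally show "Kmat N $$ (i,j) = (Lmat N * Dmat N) $$ (i,j)" using ij by simp
qed simp_all

lemma KL: "Kmat N * Lmat N = Dmat N"
proof (rule eq_matI)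
  fix i j assume "i < dim_row (Dmat N)" "j < dim_col (Dmat N)"
  then have ij: "i < N" "j < N" by auto
  show "(Kmat N * Lmat N) $$ (i,j) = Dmat N $$ (i,j)"
  proof -
    have "(Kmat N * Lmat N) $$ (i,j) = (\<Sum>l = 0..<N. kf i l * real (l choose j))"
      using ij by (subst mult_idx[of _ N]) (auto intro!: sum.cong)
    then show ?thesis using ij P3[OF ij(1), of j] by simp
  qed
qed simp_all

lemma TLL: "Pascal N = Lmat N * transpose_mat (Lmat N)"
proof (rule eq_matI)
  fix i j assume "i < dim_row (Lmat N * transpose_mat (Lmat N))" "j < dim_col (Lmat N * transpose_mat (Lmat N))"
  then have ij: "i < N" "j < N" by auto
  have "(Lmat N * transpose_mat (Lmat N)) $$ (i,j) = (\<Sum>l = 0..<N. real (i choose l) * real (j choose l))"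
    using ij by (subst mult_idx[of _ N]) (auto intro!: sum.cong)
  then show "Pascal N $$ (i,j) = (Lmat N * transpose_mat (Lmat N)) $$ (i,j)"
    using ij P4[OF ij] by simp
qed simp_all

lemma DD: "Dmat N * Dmat N = 1\<^sub>m N"
proof (rule eq_matI)
  fix i j assume "i < dim_row (1\<^sub>m N :: real mat)" "j < dim_col (1\<^sub>m N :: real mat)"
  then have ij: "i < N" "j < N" by auto
  have "(Dmat N * Dmat N) $$ (i,j) = (\<Sum>l = 0..<N. (if i = l then (-1)^i else 0) * (if l = j then (-1)^l else 0))"
    using ij by (subst mult_idx[of _ N]) (auto intro!: sum.cong)
  also have "\<dots> = (\<Sum>l = 0..<N. if l = i then (if i = j then 1 else 0) else 0)"
    by (rule sum.cong) (auto simp flip: power_add)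
  finally show "(Dmat N * Dmat N) $$ (i,j) = (1\<^sub>m N :: real mat) $$ (i,j)" using ij by simp
qed simp_all

lemma DT: "transpose_mat (Dmat N) = Dmat N"
  by (rule eq_matI) auto

lemma KK: "Kmat N * Kmat N = 1\<^sub>m N"
proof -
  have "Kmat N * Kmat N = Kmat N * (Lmat N * Dmat N)" using KLD by metis
  also have "\<dots> = (Kmat N * Lmat N) * Dmat N" by (simp add: assoc_mult_mat[of _ N N _ N _ N])
  also have "\<dots> = 1\<^sub>m N" by (simp add: KL DD)
  finally show ?thesis .
qed

lemma TKT: "Pascal N * Kmat N * Pascal N = Kmat N"
proof -
  let ?L = "Lmat N" and ?D = "Dmat N" and ?K = "Kmat N" and ?LT = "transpose_mat (Lmat N)"
  have LDL: "?L * ?D * ?L = ?D" using KLD KL by metis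
  have "transpose_mat (?L * ?D * ?L) = ?LT * transpose_mat (?L * ?D)"
    by (rule transpose_mult[of _ N N _ N]) auto
  also have "transpose_mat (?L * ?D) = ?D * ?LT"
    using transpose_mult[of ?L N N ?D N] DT by simp
  finally have LTD: "?LT * (?D * ?LT) = ?D" using LDL DT by simp
  have LT: "?LT \<in> carrier_mat N N" by simp
  have "Pascal N * ?K * Pascal N = (?L * ?LT) * ?K * (?L * ?LT)" using TLL by metis
  also have "\<dots> = ?L * (?LT * ((?K * ?L) * ?LT))"
  proof -
    have K: "?K \<in> carrier_mat N N" "?L \<in> carrier_mat N N" by simp_all
    have s1: "(?L * ?LT) * ?K = ?L * (?LT * ?K)"
      by (rule assoc_mult_mat) (use K LT in auto)
    have s2: "(?L * (?LT * ?K)) * (?L * ?LT) = ?L * ((?LT * ?K) * (?L * ?LT))"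
      by (rule assoc_mult_mat) (use K LT in auto)
    have s3: "(?LT * ?K) * (?L * ?LT) = ?LT * (?K * (?L * ?LT))"
      by (rule assoc_mult_mat) (use K LT in auto)
    have s4: "?K * (?L * ?LT) = (?K * ?L) * ?LT"
      by (rule assoc_mult_mat[symmetric]) (use K LT in auto)
    show ?thesis unfolding s1 s2 s3 s4 ..
  qed
  also have "\<dots> = ?L * (?LT * (?D * ?LT))" by (simp add: KL)
  also have "\<dots> = ?L * ?D" using LTD by simp
  finally show ?thesis using KLD by metis
qed


lemma Jdims[simp]: "dim_row (Jmat N) = N" "dim_col (Jmat N) = N" by (simp_all add: Jmat_def)


lemma jo_nz: assumes "0 < k" "k < N" shows "jo N k \<noteq> 0"
proof -
  have "real k ^ 2 < real N ^ 2" using assms by (simp add: power_strict_mono)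
  then show ?thesis using assms by (simp add: jo_def)
qed

lemma vseq_rec:
  "vseq N (Suc (Suc j)) = ((lam N - jd N (Suc j)) * vseq N (Suc j) - jo N (Suc j) * vseq N j) / jo N (Suc (Suc j))"
  by (simp add: Let_def lam_def jd_def jo_def algebra_simps)

lemma vseq_rat: "vseq N k \<in> \<rat>"
  by (induction N k rule: vseq.induct) (auto simp: Let_def)

lemma vvec_carrier[simp]: "vvec N \<in> carrier_vec N" and vvec_dim[simp]: "dim_vec (vvec N) = N"
  and vvec_idx[simp]: "k < N \<Longrightarrow> vvec N $ k = vseq N k"
  by (simp_all add: vvec_def)

lemma SAJ: assumes "a < N"
  shows "(\<Sum>l = 0..<N. Aent N a l * f l) = (\<Sum>l = 0..<N. Jent N a l * f l) - lam N * f a"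
proof -
  have "\<And>l. Aent N a l * f l = Jent N a l * f l - (if l = a then lam N * f a else 0)"
    by (auto simp: Aent_def algebra_simps)
  then have "(\<Sum>l = 0..<N. Aent N a l * f l) = (\<Sum>l = 0..<N. Jent N a l * f l) - (\<Sum>l = 0..<N. if l = a then lam N * f a else 0)"
    by (simp add: sum_subtractf)
  then show ?thesis using assms by simp
qed

lemma Av_idx: assumes "w \<in> carrier_vec N" "a < N"
  shows "(Amat N *\<^sub>v w) $ a = (Jmat N *\<^sub>v w) $ a - lam N * w $ a"
proof -
  have "(Amat N *\<^sub>v w) $ a = (\<Sum>l = 0..<N. Aent N a l * w $ l)"
    using assms by (subst mv_idx[of _ N]) (auto intro!: sum.cong)
  moreover have "(Jmat N *\<^sub>v w) $ a = (\<Sum>l = 0..<N. Jent N a l * w $ l)"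
    using assms by (subst mv_idx[of _ N]) (auto intro!: sum.cong)
  ultimately show ?thesis using SAJ[OF assms(2)] by simp
qed

lemma A_J: assumes w: "w \<in> carrier_vec N"
  shows "(Amat N *\<^sub>v w = 0\<^sub>v N) \<longleftrightarrow> (Jmat N *\<^sub>v w = lam N \<cdot>\<^sub>v w)"
proof
  assume h: "Amat N *\<^sub>v w = 0\<^sub>v N"
  show "Jmat N *\<^sub>v w = lam N \<cdot>\<^sub>v w"
  proof (rule eq_vecI)
    fix a assume "a < dim_vec (lam N \<cdot>\<^sub>v w)"
    then have a: "a < N" using w by simp
    have "(Amat N *\<^sub>v w) $ a = 0" using h a by simp
    then show "(Jmat N *\<^sub>v w) $ a = (lam N \<cdot>\<^sub>v w) $ a" using Av_idx[OF w a] a w by simp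
  qed (use w in simp)
next
  assume h: "Jmat N *\<^sub>v w = lam N \<cdot>\<^sub>v w"
  show "Amat N *\<^sub>v w = 0\<^sub>v N"
  proof (rule eq_vecI)
    fix a assume "a < dim_vec (0\<^sub>v N :: real vec)"
    then have a: "a < N" by simp
    have "(Jmat N *\<^sub>v w) $ a = lam N * w $ a" using h a w by simp
    then show "(Amat N *\<^sub>v w) $ a = 0\<^sub>v N $ a" using Av_idx[OF w a] a by simp
  qed simp
qed

lemma kerA_unique:
  assumes w: "w \<in> carrier_vec N" and N: "N \<ge> 2" and h: "Amat N *\<^sub>v w = 0\<^sub>v N"
  shows "w = w $ 0 \<cdot>\<^sub>v vvec N"
proof -
  have eq: "jo N a * w $ (a - 1) + (jd N a - lam N) * w $ a + jo N (a+1) * w $ (a+1) = 0" if a: "a < N" for a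
  proof -
    have "(Amat N *\<^sub>v w) $ a = (\<Sum>l = 0..<N. Aent N a l * w $ l)"
      using w a by (subst mv_idx[of _ N]) (auto intro!: sum.cong)
    then show ?thesis using SA1[OF a, of "\<lambda>l. w $ l"] h a by simp
  qed
  have main: "k < N \<longrightarrow> w $ k = w $ 0 * vseq N k" for k
  proof (induction k rule: less_induct)
    case (less k)
    show ?case
    proof (cases k)
      case 0 then show ?thesis by simp
    next
      case (Suc k')
      show ?thesis
      proof (cases k')
        case 0
        have e: "jo N 1 * w $ 1 - lam N * w $ 0 = 0" using eq[of 0] N by (simp add: jd_def)
        have jo1: "jo N 1 = 2 * lam N" by (simp add: jo_def lam_def)
        have "1 < real N ^ 2" using N by (intro one_less_power) auto
        then have lnz: "lam N \<noteq> 0" by (simp add: lam_def)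
        have "lam N * (2 * w $ 1) = lam N * w $ 0" using e jo1 by (simp add: algebra_simps)
        then have "2 * w $ 1 = w $ 0" using lnz by simp
        then have "w $ 1 = w $ 0 / 2" by simp
        then show ?thesis using Suc 0 by simp
      next
        case (Suc j)
        show ?thesis
        proof
          assume kN: "k < N"
          have k: "k = Suc (Suc j)" using \<open>k = Suc k'\<close> Suc by simp
          have "j < k" "j < N" "Suc j < k" "Suc j < N" using k kN by auto
          then have IH1: "w $ j = w $ 0 * vseq N j" and IH2: "w $ Suc j = w $ 0 * vseq N (Suc j)"
            using less.IH by blast+
          have e: "jo N (Suc j) * w $ j + (jd N (Suc j) - lam N) * w $ Suc j + jo N (Suc (Suc j)) * w $ Suc (Suc j) = 0"
            using eq[of "Suc j"] k kN by simp
          have nz: "jo N (Suc (Suc j)) \<noteq> 0" using jo_nz[of "Suc (Suc j)" N] k kN by simp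
          have "jo N (Suc (Suc j)) * w $ Suc (Suc j) = (lam N - jd N (Suc j)) * w $ Suc j - jo N (Suc j) * w $ j"
            using e by (simp add: algebra_simps)
          then have "w $ Suc (Suc j) = ((lam N - jd N (Suc j)) * w $ Suc j - jo N (Suc j) * w $ j) / jo N (Suc (Suc j))"
            using nz by (simp add: nonzero_eq_divide_eq mult.commute)
          also have "\<dots> = (w $ 0 * ((lam N - jd N (Suc j)) * vseq N (Suc j) - jo N (Suc j) * vseq N j)) / jo N (Suc (Suc j))"
            unfolding IH1 IH2 by (simp add: algebra_simps)
          also have "\<dots> = w $ 0 * vseq N (Suc (Suc j))"
            unfolding vseq_rec by simp
          finally show "w $ k = w $ 0 * vseq N k" using k by simp
        qed
      qed
    qed
  qed
  show ?thesis
  proof (rule eq_vecI)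
    fix i assume "i < dim_vec (w $ 0 \<cdot>\<^sub>v vvec N)"
    then have i: "i < N" by simp
    have "w $ i = w $ 0 * vseq N i" using main[of i] i by blast
    then show "w $ i = (w $ 0 \<cdot>\<^sub>v vvec N) $ i" using i by simp
  qed (use w in simp)
qed

lemma smult_mat_vec: assumes "M \<in> carrier_mat N N" "x \<in> carrier_vec N"
  shows "(c \<cdot>\<^sub>m M) *\<^sub>v x = c \<cdot>\<^sub>v (M *\<^sub>v x)"
  by (rule eq_vecI) (use assms in \<open>auto simp: scalar_prod_def sum_distrib_left algebra_simps\<close>)

lemma mat_zero_vec: assumes "M \<in> carrier_mat N N"
  shows "M *\<^sub>v 0\<^sub>v N = (0\<^sub>v N :: real vec)"
  by (rule eq_vecI) (use assms in \<open>auto simp: scalar_prod_def\<close>)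

lemma scal_self_nonneg: "(x :: real vec) \<bullet> x \<ge> 0"
  by (simp add: scalar_prod_def sum_nonneg)

theorem mainTheorem13:
  fixes N :: nat
  assumes "odd N" and "N \<ge> 3"
  shows "(\<forall>k<N. vseq N k \<in> \<rat>)
    \<and> eigenvector (Jmat N) (vvec N) ((real N^2 - 1) / 2)
    \<and> eigenvector (Pascal N) (vvec N) 1
    \<and> (\<forall>w. eigenvector (Jmat N) w ((real N^2 - 1) / 2) \<longrightarrow> (\<exists>c. w = c \<cdot>\<^sub>v vvec N))"
proof -
  have N2: "N \<ge> 2" and N0: "0 < N" using assms by auto
  let ?v = "vvec N" and ?A = "Amat N" and ?K = "Kmat N" and ?T = "Pascal N" and ?L = "Lmat N"
  have lamE: "(real N^2 - 1) / 2 = lam N" by (simp add: lam_def)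
  have v: "?v \<in> carrier_vec N" by simp
  have v0: "?v $ 0 = 1" using N0 by simp
  have vnz: "?v \<noteq> 0\<^sub>v N" using v0 N0 by (metis index_zero_vec(1) zero_neq_one)
  have cA: "?A \<in> carrier_mat N N" and cK: "?K \<in> carrier_mat N N" and cT: "?T \<in> carrier_mat N N"
    and cL: "?L \<in> carrier_mat N N" by simp_all
  have KAK: "?K * ?A * ?K = (-1) \<cdot>\<^sub>m ?A"
  proof -
    have "?K * ?A * ?K = ((-1) \<cdot>\<^sub>m (?A * ?K)) * ?K" by (simp add: KA)
    also have "\<dots> = (-1) \<cdot>\<^sub>m ((?A * ?K) * ?K)" by (rule mult_smult_assoc_mat[of _ N N _ N]) auto
    also have "(?A * ?K) * ?K = ?A * (?K * ?K)" by (rule assoc_mult_mat[of _ N N _ N _ N]) auto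
    also have "\<dots> = ?A" by (simp add: KK)
    finally show ?thesis .
  qed
  have d1: "det (?K * ?A * ?K) = det (?K * ?A) * det ?K" by (rule det_mult) (use cA cK in auto)
  have d2: "det (?K * ?A) = det ?K * det ?A" by (rule det_mult) (use cA cK in auto)
  have "det (?K * ?A * ?K) = det ?K * det ?A * det ?K" unfolding d1 d2 ..
  moreover have "det ((-1) \<cdot>\<^sub>m ?A) = - det ?A" using assms(1) by simp
  moreover have "det ?K * det ?K = 1"
  proof -
    have "det (?K * ?K) = det ?K * det ?K" by (rule det_mult) (use cK in auto)
    then show ?thesis using KK by simp
  qed
  ultimately have "- det ?A = det ?A" using KAK assms(1) by (simp add: algebra_simps)
  then have "det ?A = 0" by simp
  then obtain w where w: "w \<in> carrier_vec N" "w \<noteq> 0\<^sub>v N" "?A *\<^sub>v w = 0\<^sub>v N"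
    using det_0_iff_vec_prod_zero[OF cA] by blast
  have wv: "w = w $ 0 \<cdot>\<^sub>v ?v" using kerA_unique[OF w(1) N2 w(3)] .
  have w0: "w $ 0 \<noteq> 0"
  proof
    assume "w $ 0 = 0"
    then have "w = 0 \<cdot>\<^sub>v ?v" using wv by simp
    also have "\<dots> = 0\<^sub>v N" by (rule eq_vecI) auto
    finally show False using w(2) by simp
  qed
  have "w $ 0 \<cdot>\<^sub>v (?A *\<^sub>v ?v) = 0\<^sub>v N"
    using w(3) wv mult_mat_vec[OF cA v, of "w $ 0"] by metis
  then have Av: "?A *\<^sub>v ?v = 0\<^sub>v N"
  proof -
    assume h: "w $ 0 \<cdot>\<^sub>v (?A *\<^sub>v ?v) = 0\<^sub>v N"
    show ?thesis
    proof (rule eq_vecI)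
      fix i assume "i < dim_vec (0\<^sub>v N :: real vec)"
      then have i: "i < N" by simp
      have "(w $ 0 \<cdot>\<^sub>v (?A *\<^sub>v ?v)) $ i = 0" using h i by simp
      then have "w $ 0 * (?A *\<^sub>v ?v) $ i = 0" using i by simp
      then show "(?A *\<^sub>v ?v) $ i = 0\<^sub>v N $ i" using w0 i by simp
    qed simp
  qed
  have Jv: "Jmat N *\<^sub>v ?v = lam N \<cdot>\<^sub>v ?v" using A_J[OF v] Av by simp
  have ker: "u = u $ 0 \<cdot>\<^sub>v ?v" if "u \<in> carrier_vec N" "?A *\<^sub>v u = 0\<^sub>v N" for u
    using kerA_unique[OF that(1) N2 that(2)] .
  have Tv_c: "?T *\<^sub>v ?v \<in> carrier_vec N" by (rule mult_mat_vec_carrier[OF cT v])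
  have "?A *\<^sub>v (?T *\<^sub>v ?v) = (?A * ?T) *\<^sub>v ?v" by (rule assoc_mult_mat_vec[OF cA cT v, symmetric])
  also have "\<dots> = (?T * ?A) *\<^sub>v ?v" by (simp add: TA)
  also have "\<dots> = ?T *\<^sub>v (?A *\<^sub>v ?v)" by (rule assoc_mult_mat_vec[OF cT cA v])
  also have "\<dots> = 0\<^sub>v N" using Av mat_zero_vec[OF cT] by simp
  finally have "?A *\<^sub>v (?T *\<^sub>v ?v) = 0\<^sub>v N" .
  then have Tv: "?T *\<^sub>v ?v = (?T *\<^sub>v ?v) $ 0 \<cdot>\<^sub>v ?v" using ker Tv_c by blast
  define \<mu> where "\<mu> = (?T *\<^sub>v ?v) $ 0"
  have Tv': "?T *\<^sub>v ?v = \<mu> \<cdot>\<^sub>v ?v" using Tv \<mu>_def by simp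
  have Kv_c: "?K *\<^sub>v ?v \<in> carrier_vec N" by (rule mult_mat_vec_carrier[OF cK v])
  have "?A *\<^sub>v (?K *\<^sub>v ?v) = (?A * ?K) *\<^sub>v ?v" by (rule assoc_mult_mat_vec[OF cA cK v, symmetric])
  also have "\<dots> = ((-1) \<cdot>\<^sub>m (?K * ?A)) *\<^sub>v ?v" by (simp add: AK)
  also have "\<dots> = (-1) \<cdot>\<^sub>v ((?K * ?A) *\<^sub>v ?v)" by (rule smult_mat_vec) (use cA cK v in auto)
  also have "(?K * ?A) *\<^sub>v ?v = ?K *\<^sub>v (?A *\<^sub>v ?v)" by (rule assoc_mult_mat_vec[OF cK cA v])
  also have "\<dots> = 0\<^sub>v N" using Av mat_zero_vec[OF cK] by simp
  also have "(-1) \<cdot>\<^sub>v 0\<^sub>v N = (0\<^sub>v N :: real vec)" by (rule eq_vecI) auto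
  finally have "?A *\<^sub>v (?K *\<^sub>v ?v) = 0\<^sub>v N" .
  then have Kv1: "?K *\<^sub>v ?v = (?K *\<^sub>v ?v) $ 0 \<cdot>\<^sub>v ?v" using ker Kv_c by blast
  have "(?K *\<^sub>v ?v) $ 0 = (\<Sum>l = 0..<N. kf 0 l * ?v $ l)"
    using N0 by (subst mv_idx[of _ N]) (auto intro!: sum.cong)
  also have "\<dots> = (\<Sum>l = 0..<N. if l = 0 then 1 else 0)"
    by (rule sum.cong) (use N0 in \<open>auto simp: kf_def\<close>)
  also have "\<dots> = 1" using N0 by simp
  finally have Kv: "?K *\<^sub>v ?v = ?v" using Kv1 by simp
  have "?v = ?K *\<^sub>v ?v" using Kv by simp
  also have "\<dots> = (?T * ?K * ?T) *\<^sub>v ?v" by (simp add: TKT)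
  also have "\<dots> = ?T *\<^sub>v (?K *\<^sub>v (?T *\<^sub>v ?v))"
    by (simp only: assoc_mult_mat_vec[OF mult_carrier_mat[OF cT cK] cT v] assoc_mult_mat_vec[OF cT cK Tv_c])
  also have "\<dots> = ?T *\<^sub>v (?K *\<^sub>v (\<mu> \<cdot>\<^sub>v ?v))" using Tv' by simp
  also have "\<dots> = ?T *\<^sub>v (\<mu> \<cdot>\<^sub>v (?K *\<^sub>v ?v))" using mult_mat_vec[OF cK v] by simp
  also have "\<dots> = \<mu> \<cdot>\<^sub>v (?T *\<^sub>v ?v)" using mult_mat_vec[OF cT v] Kv by simp
  also have "\<dots> = \<mu> \<cdot>\<^sub>v (\<mu> \<cdot>\<^sub>v ?v)" using Tv' by simp
  finally have "?v $ 0 = (\<mu> \<cdot>\<^sub>v (\<mu> \<cdot>\<^sub>v ?v)) $ 0" by simp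
  then have mu2: "\<mu> * \<mu> = 1" using v0 N0 by simp
  let ?LT = "transpose_mat ?L"
  have cLT: "?LT \<in> carrier_mat N N" by simp
  have cLTv: "?LT *\<^sub>v ?v \<in> carrier_vec N" by (rule mult_mat_vec_carrier[OF cLT v])
  have "?v \<bullet> (?T *\<^sub>v ?v) = ?v \<bullet> (?L *\<^sub>v (?LT *\<^sub>v ?v))"
    using TLL[of N] cL v by (metis assoc_mult_mat_vec transpose_carrier_mat)
  also have "\<dots> = (?LT *\<^sub>v ?v) \<bullet> (?LT *\<^sub>v ?v)"
    by (rule transpose_vec_mult_scalar[symmetric, of _ N N]) (use cL v cLTv in auto)
  finally have pos: "?v \<bullet> (?T *\<^sub>v ?v) \<ge> 0" using scal_self_nonneg by simp
  have "?v \<bullet> ?v \<ge> ?v $ 0 * ?v $ 0"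
  proof -
    have "?v \<bullet> ?v = (\<Sum>i = 0..<N. ?v $ i * ?v $ i)" by (simp add: scalar_prod_def)
    also have "\<dots> \<ge> ?v $ 0 * ?v $ 0"
      by (rule member_le_sum) (use N0 in auto)
    finally show ?thesis .
  qed
  then have vv: "?v \<bullet> ?v > 0" using v0 by simp
  have "?v \<bullet> (?T *\<^sub>v ?v) = \<mu> * (?v \<bullet> ?v)" using Tv' v by simp
  then have "\<mu> \<ge> 0" using pos vv by (simp add: zero_le_mult_iff)
  moreover have "(\<mu> - 1) * (\<mu> + 1) = 0" using mu2 by (simp add: algebra_simps)
  ultimately have mu1: "\<mu> = 1" by auto
  have part1: "\<forall>k<N. vseq N k \<in> \<rat>" using vseq_rat by blast
  have part2: "eigenvector (Jmat N) ?v ((real N^2 - 1) / 2)"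
    unfolding eigenvector_def lamE using Jv vnz by simp
  have part3: "eigenvector ?T ?v 1"
    unfolding eigenvector_def using Tv' mu1 vnz by simp
  have part4: "\<forall>u. eigenvector (Jmat N) u ((real N^2 - 1) / 2) \<longrightarrow> (\<exists>c. u = c \<cdot>\<^sub>v ?v)"
  proof (intro allI impI)
    fix u assume "eigenvector (Jmat N) u ((real N^2 - 1) / 2)"
    then have u: "u \<in> carrier_vec N" "Jmat N *\<^sub>v u = lam N \<cdot>\<^sub>v u"
      unfolding eigenvector_def lamE by auto
    then have "?A *\<^sub>v u = 0\<^sub>v N" using A_J by blast
    then show "\<exists>c. u = c \<cdot>\<^sub>v ?v" using ker u(1) by blast
  qed
  show ?thesis using part1 part2 part3 part4 by blast
qed

end
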